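(* With $k(c)$ as defined below, $\dfrac{1}{k(c)}\log\left|r_1(c)r_2(c)\cdots r_{k(c)}(c)\right|\to\log 2$ as $c\to-2$, $c<-2$.
   Context: For real $c<-2$ let $f_c(z)=z^2+c$ and $r_n(c)=f_c^{\circ n}(0)$, so $r_1(c)=c$ and $r_{n+1}(c)=r_n(c)^2+c$. For $-3<c<-2$, $k(c)$ denotes the smallest positive integer $k$ such that $r_{k+1}(c)/r_k(c)\ge 36$. *)

theory Defs
  imports Complex_Main
begin

text \<open>Orbit of the critical point: r n c = f_c^n(0), with f_c(z) = z^2 + c.
  Thus r 0 c = 0, r 1 c = c, r (n+1) c = (r n c)^2 + c.\<close>
fun r :: "nat \<Rightarrow> real \<Rightarrow> real" where
  "r 0 c = 0"
| "r (Suc n) c = (r n c)^2 + c"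

text \<open>k(c): smallest positive integer k with r_{k+1}(c) / r_k(c) \<ge> 36 (meaningful for -3 < c < -2).\<close>
definition kk :: "real \<Rightarrow> nat" where
  "kk c = (LEAST k. 0 < k \<and> r (Suc k) c / r k c \<ge> 36)"

end

theory Submission
  imports Defs
begin

lemma r_2: "r 2 c = c^2 + c" by (simp add: eval_nat_numeral)
lemma r_Suc: "r (Suc n) c = r n c ^ 2 + c" by simp
lemma r_1[simp]: "r 1 c = c" by simp
lemma r_Suc0[simp]: "r (Suc 0) c = c" by simp
declare r.simps(2)[simp del]

lemma mono_r:
  assumes "c < -2"
  shows "2 \<le> r (Suc (Suc n)) c \<and> r (Suc (Suc n)) c < r (Suc (Suc (Suc n))) c"
proof (induction n)
  case 0
  have r2: "r (Suc (Suc 0)) c = c^2 + c" by (simp add: r_Suc power2_eq_square)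
  have r3: "r (Suc (Suc (Suc 0))) c = (r (Suc (Suc 0)) c)^2 + c" by (rule r_Suc)
  have a: "0 < (c+2)*(c-1)" using assms by (intro mult_neg_neg) auto
  have "2 \<le> c^2 + c" using a by (simp add: algebra_simps power2_eq_square)
  moreover have b0: "0 < c * (c+2)" using assms by (intro mult_neg_neg) auto
  have b: "0 < c^2 * (c^2+2*c)" using assms b0
    by (intro mult_pos_pos) (auto simp: power2_eq_square algebra_simps)
  moreover have "r (Suc (Suc (Suc 0))) c - r (Suc (Suc 0)) c = c^2 * (c^2+2*c)"
    unfolding r3 r2 by (simp add: algebra_simps power2_eq_square)
  ultimately show ?case using r2 by simp
next
  case (Suc n)
  have e1: "r (Suc (Suc (Suc (Suc n)))) c = r (Suc (Suc (Suc n))) c ^2 + c" by (rule r_Suc)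
  have e2: "r (Suc (Suc (Suc n))) c = r (Suc (Suc n)) c ^2 + c" by (rule r_Suc)
  have "r (Suc (Suc n)) c ^2 < r (Suc (Suc (Suc n))) c ^2" using Suc by (intro power_strict_mono) auto
  then show ?case using Suc e1 e2 by linarith
qed

lemma ge2: assumes "c < -2" "2 \<le> n" shows "2 \<le> r n c"
proof -
  obtain m where "n = Suc (Suc m)" using assms(2) by (metis add_2_eq_Suc le_Suc_ex add.commute)
  then show ?thesis using mono_r[OF assms(1), of m] by blast
qed

lemma abs_ge2: assumes "c < -2" "1 \<le> n" shows "2 \<le> \<bar>r n c\<bar>"
proof (cases "n = 1")
  case False
  then have "2 \<le> r n c" using assms by (intro ge2) auto
  then show ?thesis by simp
qed (use assms in auto)

lemma diff_grow:
  assumes "c < -2"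
  shows "r (Suc (Suc (Suc 0))) c - r (Suc (Suc 0)) c \<le> r (Suc (Suc (Suc n))) c - r (Suc (Suc n)) c"
proof (induction n)
  case 0 then show ?case by simp
next
  case (Suc n)
  have e1: "r (Suc (Suc (Suc (Suc n)))) c = r (Suc (Suc (Suc n))) c ^2 + c" by (rule r_Suc)
  have e2: "r (Suc (Suc (Suc n))) c = r (Suc (Suc n)) c ^2 + c" by (rule r_Suc)
  have m: "2 \<le> r (Suc (Suc n)) c" "r (Suc (Suc n)) c < r (Suc (Suc (Suc n))) c"
    using mono_r[OF assms, of n] by auto
  have "r (Suc (Suc (Suc (Suc n)))) c - r (Suc (Suc (Suc n))) c
      = (r (Suc (Suc (Suc n))) c - r (Suc (Suc n)) c) * (r (Suc (Suc (Suc n))) c + r (Suc (Suc n)) c)"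
    using e1 e2 by (simp add: algebra_simps power2_eq_square)
  also have "\<dots> \<ge> (r (Suc (Suc (Suc n))) c - r (Suc (Suc n)) c) * 1"
    using m by (intro mult_left_mono) auto
  finally show ?case using Suc by simp
qed

lemma lin_grow:
  assumes "c < -2"
  shows "r (Suc (Suc 0)) c + real n * (r (Suc (Suc (Suc 0))) c - r (Suc (Suc 0)) c) \<le> r (Suc (Suc n)) c"
proof (induction n)
  case 0 then show ?case by simp
next
  case (Suc n)
  have "r (Suc (Suc (Suc 0))) c - r (Suc (Suc 0)) c \<le> r (Suc (Suc (Suc n))) c - r (Suc (Suc n)) c"
    by (rule diff_grow[OF assms])
  then show ?case using Suc by (simp add: algebra_simps)
qed

lemma ratio_ge:
  assumes "-3 < c" "c < 0" "40 \<le> x"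
  shows "36 \<le> (x^2 + c) / (x::real)"
proof -
  have "36 * x \<le> x^2 + c"
  proof -
    have "4 * 40 \<le> (x - 36) * x" using assms by (intro mult_mono) auto
    then show ?thesis using assms by (simp add: algebra_simps power2_eq_square)
  qed
  then show ?thesis using assms by (simp add: pos_le_divide_eq)
qed

lemma exists_k:
  assumes "-3 < c" "c < -2"
  shows "\<exists>k. 0 < k \<and> 36 \<le> r (Suc k) c / r k c"
proof -
  have d: "0 < r (Suc (Suc (Suc 0))) c - r (Suc (Suc 0)) c" using mono_r[OF assms(2), of 0] by simp
  obtain n :: nat where n: "40 / (r (Suc (Suc (Suc 0))) c - r (Suc (Suc 0)) c) < n" using reals_Archimedean2 by blast
  have "40 \<le> real n * (r (Suc (Suc (Suc 0))) c - r (Suc (Suc 0)) c)" using n d by (simp add: divide_less_eq)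
  moreover have "2 \<le> r (Suc (Suc 0)) c" using mono_r[OF assms(2), of 0] by blast
  ultimately have "40 \<le> r (Suc (Suc n)) c" using lin_grow[OF assms(2), of n] by simp
  then have "36 \<le> r (Suc (Suc (Suc n))) c / r (Suc (Suc n)) c"
    using ratio_ge[OF assms(1) _ \<open>40 \<le> r (Suc (Suc n)) c\<close>] assms by (simp add: r_Suc)
  then show ?thesis by (intro exI[of _ "Suc (Suc n)"]) simp
qed

lemma kk_props:
  assumes "-3 < c" "c < -2"
  shows "0 < kk c" "36 \<le> r (Suc (kk c)) c / r (kk c) c"
    "\<And>j. 0 < j \<Longrightarrow> j < kk c \<Longrightarrow> r (Suc j) c / r j c < 36"
proof -
  let ?P = "\<lambda>k. 0 < k \<and> 36 \<le> r (Suc k) c / r k c"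
  have ex: "\<exists>k. ?P k" by (rule exists_k[OF assms])
  have "?P (kk c)" unfolding kk_def by (rule LeastI_ex[OF ex])
  then show "0 < kk c" "36 \<le> r (Suc (kk c)) c / r (kk c) c" by auto
  fix j assume "0 < j" "j < kk c"
  have "\<not> ?P j" using \<open>j < kk c\<close> unfolding kk_def by (rule not_less_Least)
  then show "r (Suc j) c / r j c < 36" using \<open>0 < j\<close> by auto
qed

lemma kk_ge2:
  assumes "-3 < c" "c < -2"
  shows "2 \<le> kk c"
proof (rule ccontr)
  assume "\<not> 2 \<le> kk c"
  then have "kk c = 1" using kk_props(1)[OF assms] by auto
  then have "36 \<le> r (Suc 1) c / c" using kk_props(2)[OF assms] by simp
  moreover have "2 \<le> r (Suc 1) c" using ge2[OF assms(2), of "Suc 1"] by simp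
  ultimately show False using assms by (simp add: divide_pos_neg le_divide_eq)
qed

lemma ratio_eq: "0 < r k c \<Longrightarrow> r (Suc k) c / r k c = r k c + c / r k c"
  by (simp add: r_Suc field_simps power2_eq_square)

lemma small_before:
  assumes "-3 < c" "c < -2" "1 \<le> i" "i < kk c"
  shows "\<bar>r i c\<bar> \<le> 75/2"
proof (cases "i = 1")
  case True then show ?thesis using assms by simp
next
  case False
  then have g: "2 \<le> r i c" using assms by (intro ge2) auto
  have "r (Suc i) c / r i c < 36" using kk_props(3)[OF assms(1,2)] assms by auto
  then have "r i c + c / r i c < 36" using ratio_eq[of i c] g by simp
  moreover have "-3/2 \<le> c / r i c"
  proof -
    have "-3/2 * r i c \<le> c" using g assms by (simp add: mult_mono) 
    then show ?thesis using g by (simp add: le_divide_eq)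
  qed
  ultimately show ?thesis using g by simp
qed

lemma bound_all:
  assumes "-3 < c" "c < -2" "1 \<le> i" "i \<le> kk c"
  shows "\<bar>r i c\<bar> \<le> 1444"
proof (cases "i < kk c")
  case True then show ?thesis using small_before[OF assms(1,2,3)] by simp
next
  case False
  then have i: "i = kk c" using assms by simp
  have k2: "2 \<le> kk c" by (rule kk_ge2[OF assms(1,2)])
  obtain j where j: "kk c = Suc j" using k2 by (cases "kk c") auto
  have "\<bar>r j c\<bar> \<le> 75/2" using small_before[OF assms(1,2), of j] j k2 by simp
  then have "r j c ^ 2 \<le> (75/2)^2" by (metis abs_le_square_iff abs_of_nonneg zero_le_divide_iff zero_le_numeral)
  moreover have "2 \<le> r (kk c) c" using ge2[OF assms(2) k2] .
  moreover have "(75/2::real)^2 = 5625/4" by (simp add: power2_eq_square)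
  ultimately show ?thesis using i j assms by (simp add: r_Suc)
qed

lemma escape:
  assumes "-2 - \<delta> < c" "c < -2" "0 < \<delta>" "2 + \<delta> \<le> r j c"
  shows "2 + 3^m * \<delta> \<le> r (j+m) c"
proof (induction m)
  case 0 then show ?case using assms by simp
next
  case (Suc m)
  let ?y = "r (j+m) c"
  have "\<delta> \<le> 3^m * \<delta>" using assms by simp
  then have y: "2 + \<delta> \<le> ?y" using Suc by simp
  have "\<delta> * 1 \<le> (?y - 2) * (?y - 1)" using y assms by (intro mult_mono) auto
  then have "3 * (?y - 2) \<le> ?y^2 + c - 2" using assms by (simp add: algebra_simps power2_eq_square)
  then show ?case using Suc by (simp add: r_Suc algebra_simps)
qed

lemma before_small:
  assumes "-2 - \<delta> < c" "c < -2" "0 < \<delta>" "\<delta> \<le> 1/2" "38 \<le> 3^M * \<delta>"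
    "2 \<le> i" "i + M < kk c"
  shows "r i c < 2 + \<delta>"
proof (rule ccontr)
  assume "\<not> r i c < 2 + \<delta>"
  then have "2 + 3^M * \<delta> \<le> r (i+M) c" using assms by (intro escape) auto
  then have x: "40 \<le> r (i+M) c" using assms by simp
  have c3: "-3 < c" using assms by simp
  have "36 \<le> r (Suc (i+M)) c / r (i+M) c"
    using ratio_ge[OF c3 _ x] assms by (simp add: r_Suc)
  moreover have "r (Suc (i+M)) c / r (i+M) c < 36"
    using kk_props(3)[OF c3 assms(2), of "i+M"] assms by simp
  ultimately show False by simp
qed

lemma isCont_r: "isCont (r n) x"
proof (induction n)
  case 0 then show ?case by simp
next
  case (Suc n)
  have e: "r (Suc n) = (\<lambda>c. r n c ^ 2 + c)" by (rule ext) (rule r_Suc)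
  show ?case unfolding e using Suc by (intro continuous_intros) auto
qed

lemma r_m2: "\<bar>r n (-2)\<bar> \<le> 2"
proof (induction n)
  case 0 then show ?case by simp
next
  case (Suc n)
  have "r n (-2) ^ 2 \<le> 2^2" using Suc by (metis abs_le_square_iff abs_of_nonneg zero_le_numeral)
  then show ?case using zero_le_power2[of "r n (-2)"] by (simp add: r_Suc abs_le_iff)
qed

lemma ev_small: "eventually (\<lambda>c. \<forall>i\<in>{..N}. r i c < 36) (at_left (-2))"
proof (rule eventually_ball_finite)
  show "\<forall>i\<in>{..N}. \<forall>\<^sub>F c in at_left (- 2). r i c < 36"
  proof
    fix i
    have t: "(r i \<longlongrightarrow> r i (-2)) (at (-2))" using isCont_r[where n=i and x="-2"] by (simp add: isCont_def)
    have "(r i \<longlongrightarrow> r i (-2)) (at_left (-2))" by (rule tendsto_within_subset[OF t]) auto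
    moreover have "r i (-2) < 36" using r_m2[of i] by simp
    ultimately show "\<forall>\<^sub>F c in at_left (- 2). r i c < 36" by (rule order_tendstoD)
  qed
qed auto

lemma kk_gt:
  assumes "-3 < c" "c < -2" "\<forall>i\<in>{..N}. r i c < 36"
  shows "N < kk c"
proof (rule ccontr)
  assume "\<not> N < kk c"
  then have lt: "r (kk c) c < 36" using assms(3) by auto
  have k2: "2 \<le> kk c" by (rule kk_ge2[OF assms(1,2)])
  have g: "2 \<le> r (kk c) c" by (rule ge2[OF assms(2) k2])
  have "c / r (kk c) c < 0" using g assms by (simp add: divide_neg_pos)
  then have "r (Suc (kk c)) c / r (kk c) c < 36" using ratio_eq[of "kk c" c] g lt by simp
  then show False using kk_props(2)[OF assms(1,2)] by simp
qed

lemma lower: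
  assumes "-3 < c" "c < -2"
  shows "real (kk c) * ln 2 \<le> ln \<bar>\<Prod>i\<in>{1..kk c}. r i c\<bar>"
proof -
  have "(\<Prod>i\<in>{1..kk c}. (2::real)) \<le> (\<Prod>i\<in>{1..kk c}. \<bar>r i c\<bar>)"
    by (intro prod_mono) (use abs_ge2[OF assms(2)] in auto)
  then have "2 ^ kk c \<le> \<bar>\<Prod>i\<in>{1..kk c}. r i c\<bar>" by (simp add: abs_prod)
  note A = this
  have p2: "(0::real) < 2 ^ kk c" by simp
  have B: "0 < \<bar>\<Prod>i\<in>{1..kk c}. r i c\<bar>" by (rule less_le_trans[OF p2 A])
  have "ln (2 ^ kk c) \<le> ln \<bar>\<Prod>i\<in>{1..kk c}. r i c\<bar>"
    by (rule iffD2[OF ln_le_cancel_iff[OF p2 B] A])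
  then show ?thesis by (simp add: ln_realpow)
qed

lemma upper:
  assumes "-2 - \<delta> < c" "c < -2" "0 < \<delta>" "\<delta> \<le> 1/2" "38 \<le> 3^M * \<delta>"
  shows "ln \<bar>\<Prod>i\<in>{1..kk c}. r i c\<bar> \<le> real (kk c) * ln (2 + \<delta>) + real (M+2) * ln 1444"
proof -
  have c3: "-3 < c" using assms by simp
  define k where "k = kk c"
  define I where "I = {1..k}"
  define A where "A = {1} \<union> {k-M..k}"
  have "(\<Prod>i\<in>I. \<bar>r i c\<bar>) \<le> (\<Prod>i\<in>I. (2+\<delta>) * (if i \<in> A then 1444 else 1))"
  proof (intro prod_mono conjI)
    fix i assume i: "i \<in> I"
    show "0 \<le> \<bar>r i c\<bar>" by simp
    show "\<bar>r i c\<bar> \<le> (2+\<delta>) * (if i \<in> A then 1444 else 1)"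
    proof (cases "i \<in> A")
      case True
      have "\<bar>r i c\<bar> \<le> 1444" using bound_all[OF c3 assms(2)] i by (auto simp: I_def k_def)
      also have "\<dots> \<le> (2+\<delta>) * 1444" using assms by simp
      finally show ?thesis using True by simp
    next
      case False
      then have "2 \<le> i" "i + M < kk c" using i by (auto simp: I_def A_def k_def)
      then have "r i c < 2 + \<delta>" using before_small[OF assms] by blast
      moreover have "2 \<le> r i c" using ge2[OF assms(2) \<open>2 \<le> i\<close>] .
      ultimately show ?thesis using False by simp
    qed
  qed
  also have "\<dots> = (2+\<delta>)^k * (\<Prod>i\<in>I. (if i \<in> A then 1444 else 1))"
    by (simp add: prod.distrib I_def)
  also have "(\<Prod>i\<in>I. (if i \<in> A then 1444 else 1)) = (\<Prod>i\<in>I \<inter> A. (1444::real))"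
    by (rule prod.inter_restrict[symmetric]) (simp add: I_def)
  also have "\<dots> = 1444 ^ card (I \<inter> A)" by simp
  also have "\<dots> \<le> 1444 ^ (M+2)"
  proof (rule power_increasing)
    have "card (I \<inter> A) \<le> card A" by (rule card_mono) (auto simp: A_def)
    also have "\<dots> \<le> card {1::nat} + card {k-M..k}" unfolding A_def by (rule card_Un_le)
    also have "\<dots> \<le> M + 2" by simp
    finally show "card (I \<inter> A) \<le> M + 2" .
  qed simp
  finally have P: "(\<Prod>i\<in>I. \<bar>r i c\<bar>) \<le> (2+\<delta>)^k * 1444 ^ (M+2)" using assms by simp
  have pos: "0 < (\<Prod>i\<in>I. \<bar>r i c\<bar>)"
    by (intro prod_pos) (use abs_ge2[OF assms(2)] in \<open>force simp: I_def\<close>)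
  have "ln (\<Prod>i\<in>I. \<bar>r i c\<bar>) \<le> ln ((2+\<delta>)^k * 1444 ^ (M+2))"
    using P pos by (subst ln_le_cancel_iff) auto
  also have "\<dots> = ln ((2+\<delta>)^k) + ln (1444 ^ (M+2))"
    by (rule ln_mult_pos) (use assms in auto)
  also have "ln ((2+\<delta>)^k) = real k * ln (2+\<delta>)" by (rule ln_realpow)
  also have "ln ((1444::real) ^ (M+2)) = real (M+2) * ln 1444" by (rule ln_realpow)
  finally show ?thesis by (simp add: abs_prod I_def k_def)
qed

theorem lemma1:
  shows "((\<lambda>c. ln \<bar>\<Prod>i\<in>{1..kk c}. r i c\<bar> / real (kk c)) \<longlongrightarrow> ln 2) (at_left (-2))"
proof (rule tendstoI)
  fix e :: real assume e: "0 < e"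
  define \<delta> where "\<delta> = min (1/2) (e/2)"
  have d0: "0 < \<delta>" "\<delta> \<le> 1/2" "\<delta> \<le> e/2" using e by (auto simp: \<delta>_def)
  obtain M :: nat where M: "38/\<delta> < 3^M" using real_arch_pow[of 3 "38/\<delta>"] by auto
  then have M': "38 \<le> 3^M * \<delta>" using d0 by (simp add: divide_less_eq)
  define C where "C = real (M+2) * ln 1444"
  have C0: "0 \<le> C" by (simp add: C_def)
  obtain N :: nat where N: "2*C/e < N" using reals_Archimedean2 by blast
  have ev1: "eventually (\<lambda>c. c \<in> {-2-\<delta><..<-2}) (at_left (-2::real))"
    by (rule eventually_at_left_real) (use d0 in simp)
  have ev2: "eventually (\<lambda>c. \<forall>i\<in>{..N}. r i c < 36) (at_left (-2))" by (rule ev_small)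
  show "eventually (\<lambda>c. dist (ln \<bar>\<Prod>i\<in>{1..kk c}. r i c\<bar> / real (kk c)) (ln 2) < e) (at_left (-2))"
    using ev1 ev2
  proof eventually_elim
    case (elim c)
    have c: "-2 - \<delta> < c" "c < -2" using elim by auto
    have c3: "-3 < c" using c d0 by simp
    define k where "k = kk c"
    define L where "L = ln \<bar>\<Prod>i\<in>{1..kk c}. r i c\<bar>"
    have Nk: "N < k" unfolding k_def by (rule kk_gt[OF c3 c(2)]) (use elim in auto)
    have kpos: "0 < real k" using Nk by simp
    have lo: "real k * ln 2 \<le> L" unfolding k_def L_def by (rule lower[OF c3 c(2)])
    have up: "L \<le> real k * ln (2 + \<delta>) + C"
      unfolding k_def L_def C_def by (rule upper[OF c d0(1,2) M'])
    have lnd: "ln (2 + \<delta>) \<le> ln 2 + \<delta>/2"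
    proof -
      have "ln (2 + \<delta>) = ln (2 * (1 + \<delta>/2))" by (simp add: algebra_simps)
      also have "\<dots> = ln 2 + ln (1 + \<delta>/2)" by (rule ln_mult_pos) (use d0 in auto)
      also have "ln (1 + \<delta>/2) \<le> \<delta>/2" by (rule ln_add_one_self_le_self) (use d0 in auto)
      finally show ?thesis by simp
    qed
    have Ck: "C / real k < e/2"
    proof -
      have "2*C/e < real k" using N Nk by (meson less_trans of_nat_less_iff)
      then have "2*C < real k * e" using e by (simp add: divide_less_eq)
      then show ?thesis using kpos by (simp add: divide_less_eq mult.commute)
    qed
    have q1: "ln 2 \<le> L / real k" using lo kpos by (simp add: le_divide_eq mult.commute)
    have "L / real k \<le> (real k * ln (2 + \<delta>) + C) / real k" using up kpos by (simp add: divide_right_mono)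
    also have "\<dots> = ln (2 + \<delta>) + C / real k" using kpos by (simp add: field_simps)
    finally have q2: "L / real k < ln 2 + e" using lnd Ck d0 by linarith
    show ?case using q1 q2 unfolding L_def k_def dist_real_def by simp
  qed
qed

end
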